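(* Let $d\ge 2$, $\mathcal{X}\in\mathbb{C}^{n_1\times\cdots\times n_d}$ and $0<\epsilon<1$. Suppose that for each $1\le j\le d-1$ there are matrices $U_j\in\mathbb{C}^{(\prod_{i=1}^j n_i)\times r_j}$ with orthonormal columns and $V_j\in\mathbb{C}^{(\prod_{i=j+1}^d n_i)\times r_j}$ such that $\|X_j-U_jV_j^*\|_F\le \frac{\epsilon}{\sqrt{d-1}}\|\mathcal{X}\|_F$, where $X_j$ is the $j$th unfolding of $\mathcal{X}$. Set $r_0=r_d=1$ and define TT cores $\mathcal{G}_1=\operatorname{reshape}(U_1,1,n_1,r_1)$, $\mathcal{G}_d=\operatorname{reshape}(V_{d-1}^*,r_{d-1},n_d,1)$, and for $1\le k\le d-2$ \[\mathcal{G}_{k+1}=\operatorname{reshape}\Big(U_k^*\,\operatorname{reshape}\big(U_{k+1},\textstyle\prod_{i=1}^k n_i,\ n_{k+1}r_{k+1}\big),\ r_k,\ n_{k+1},\ r_{k+1}\Big).\] Then the tensor $\tilde{\mathcal{X}}$ with TT cores $\mathcal{G}_1,\dots,\mathcal{G}_d$ satisfies $\|\mathcal{X}-\tilde{\mathcal{X}}\|_F\le\epsilon\|\mathcal{X}\|_F$.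
   Context: $\operatorname{reshape}$ follows MATLAB semantics (column-major ordering preserved). The $j$th unfolding of $\mathcal{X}\in\mathbb{C}^{n_1\times\cdots\times n_d}$ is $X_j=\operatorname{reshape}(\mathcal{X},\prod_{s=1}^j n_s,\prod_{s=j+1}^d n_s)$. A tensor $\mathcal{Y}$ has TT cores $\mathcal{G}_k\in\mathbb{C}^{s_{k-1}\times n_k\times s_k}$ ($s_0=s_d=1$) if $\mathcal{Y}_{i_1,\dots,i_d}=\mathcal{G}_1(:,i_1,:)\mathcal{G}_2(:,i_2,:)\cdots\mathcal{G}_d(:,i_d,:)$ (a product of matrices) for all indices. $\|\cdot\|_F$ is the Frobenius norm (square root of the sum of squared moduli of all entries). *)

theory Defs
  imports "HOL-Analysis.Analysis" "Jordan_Normal_Form.Schur_Decomposition"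
begin

text \<open>Tensors of size n 1 x ... x n d are functions on multi-indices (lists of length d,
  0-based, entry k-1 ranging over {0..<n k}).  Indices are 0-based throughout.\<close>

definition tidx :: "(nat \<Rightarrow> nat) \<Rightarrow> nat \<Rightarrow> nat list set" where
  "tidx n d = {ix. length ix = d \<and> (\<forall>k<d. ix ! k < n (k + 1))}"

definition pdim :: "(nat \<Rightarrow> nat) \<Rightarrow> nat \<Rightarrow> nat" where
  "pdim n j = (\<Prod>s=1..j. n s)"

definition qdim :: "(nat \<Rightarrow> nat) \<Rightarrow> nat \<Rightarrow> nat \<Rightarrow> nat" where
  "qdim n d j = (\<Prod>s=j+1..d. n s)"

definition mindex :: "(nat \<Rightarrow> nat) \<Rightarrow> nat \<Rightarrow> nat \<Rightarrow> nat list" where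
  "mindex n d l = map (\<lambda>k. (l div pdim n k) mod n (k + 1)) [0..<d]"

definition tfrob :: "(nat \<Rightarrow> nat) \<Rightarrow> nat \<Rightarrow> (nat list \<Rightarrow> complex) \<Rightarrow> real" where
  "tfrob n d X = sqrt (\<Sum>ix\<in>tidx n d. (cmod (X ix))\<^sup>2)"

definition mfrob :: "complex mat \<Rightarrow> real" where
  "mfrob A = sqrt (\<Sum>i<dim_row A. \<Sum>j<dim_col A. (cmod (A $$ (i, j)))\<^sup>2)"

text \<open>j-th unfolding X_j = reshape(X, n1...nj, n(j+1)...nd), column-major.\<close>
definition tunfold :: "(nat \<Rightarrow> nat) \<Rightarrow> nat \<Rightarrow> (nat list \<Rightarrow> complex) \<Rightarrow> nat \<Rightarrow> complex mat" where
  "tunfold n d X j = mat (pdim n j) (qdim n d j)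
     (\<lambda>(a, b). X (mindex n d (a + pdim n j * b)))"

definition vecm :: "complex mat \<Rightarrow> nat \<Rightarrow> complex" where
  "vecm M l = M $$ (l mod dim_row M, l div dim_row M)"

definition reshape_mat :: "complex mat \<Rightarrow> nat \<Rightarrow> nat \<Rightarrow> complex mat" where
  "reshape_mat M p q = mat p q (\<lambda>(i, j). vecm M (i + p * j))"

text \<open>MATLAB reshape of a matrix into an s x m x t three-way tensor (0-based entries a i b).\<close>
definition reshape3 :: "complex mat \<Rightarrow> nat \<Rightarrow> nat \<Rightarrow> nat \<Rightarrow> nat \<Rightarrow> nat \<Rightarrow> nat \<Rightarrow> complex" where
  "reshape3 M s m t a i b = vecm M (a + s * i + s * m * b)"

definition core_slice :: "(nat \<Rightarrow> nat \<Rightarrow> nat \<Rightarrow> complex) \<Rightarrow> nat \<Rightarrow> nat \<Rightarrow> nat \<Rightarrow> complex mat" where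
  "core_slice G s t i = mat s t (\<lambda>(a, b). G a i b)"

text \<open>Tensor with TT cores G 1, ..., G d of sizes s(k-1) x n k x s k:
  entry at multi-index ix equals G1(:,i1,:) * ... * Gd(:,id,:) (a 1x1 matrix when s 0 = s d = 1).\<close>
definition tt_tensor :: "(nat \<Rightarrow> nat \<Rightarrow> nat \<Rightarrow> nat \<Rightarrow> complex) \<Rightarrow> (nat \<Rightarrow> nat) \<Rightarrow> nat
    \<Rightarrow> nat list \<Rightarrow> complex" where
  "tt_tensor G s d ix =
     (foldl (\<lambda>P k. P * core_slice (G k) (s (k - 1)) (s k) (ix ! (k - 1))) (1\<^sub>m (s 0)) [1..<d+1]) $$ (0, 0)"

definition tt_cores :: "(nat \<Rightarrow> nat) \<Rightarrow> nat \<Rightarrow> (nat \<Rightarrow> nat) \<Rightarrow> (nat \<Rightarrow> complex mat) \<Rightarrow> (nat \<Rightarrow> complex mat)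
    \<Rightarrow> nat \<Rightarrow> nat \<Rightarrow> nat \<Rightarrow> nat \<Rightarrow> complex" where
  "tt_cores n d r U V k =
     (if k = 1 then reshape3 (U 1) 1 (n 1) (r 1)
      else if k = d then reshape3 (mat_adjoint (V (d - 1))) (r (d - 1)) (n d) 1
      else reshape3 (mat_adjoint (U (k - 1)) *
                     reshape_mat (U k) (pdim n (k - 1)) (n k * r k))
             (r (k - 1)) (n k) (r k))"

end

theory Submission
  imports Defs
begin

lemma adj_carrier[simp]: "mat_adjoint A \<in> carrier_mat (dim_col A) (dim_row A)"
  unfolding mat_adjoint_def by (auto simp: mat_of_rows_def)
lemma adj_dims[simp]: "dim_row (mat_adjoint A) = dim_col A" "dim_col (mat_adjoint A) = dim_row A"
  unfolding mat_adjoint_def by (auto simp: mat_of_rows_def)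
lemma adj_index[simp]: "i < dim_col A \<Longrightarrow> j < dim_row A \<Longrightarrow> mat_adjoint A $$ (i,j) = cnj (A $$ (j,i))"
  unfolding mat_adjoint_def by (auto simp: mat_of_rows_def)

lemma adj_carrier'[simp]: "A \<in> carrier_mat a b \<Longrightarrow> mat_adjoint A \<in> carrier_mat b a"
  by auto

lemma mult_entry: "A \<in> carrier_mat a b \<Longrightarrow> B \<in> carrier_mat b c \<Longrightarrow> i < a \<Longrightarrow> j < c \<Longrightarrow>
   (A * B) $$ (i,j) = (\<Sum>k<b. A $$ (i,k) * B $$ (k,j))"
  by (auto simp: scalar_prod_def lessThan_atLeast0 intro!: sum.cong)

lemma adj_mult: fixes A B :: "complex mat" assumes "A \<in> carrier_mat a b" "B \<in> carrier_mat b c"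
  shows "mat_adjoint (A * B) = mat_adjoint B * mat_adjoint A"
proof (rule eq_matI)
  fix i j assume ij: "i < dim_row (mat_adjoint B * mat_adjoint A)" "j < dim_col (mat_adjoint B * mat_adjoint A)"
  have "mat_adjoint (A * B) $$ (i,j) = cnj ((A * B) $$ (j,i))" using ij assms by simp
  also have "(A * B) $$ (j,i) = (\<Sum>k<b. A $$ (j,k) * B $$ (k,i))" by (rule mult_entry) (use ij assms in auto)
  also have "(mat_adjoint B * mat_adjoint A) $$ (i,j) = (\<Sum>k<b. mat_adjoint B $$ (i,k) * mat_adjoint A $$ (k,j))"
    by (rule mult_entry) (use ij assms in auto)
  moreover have "\<dots> = cnj (\<Sum>k<b. A $$ (j,k) * B $$ (k,i))"
    using ij assms by (simp add: mult.commute)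
  ultimately show "mat_adjoint (A * B) $$ (i,j) = (mat_adjoint B * mat_adjoint A) $$ (i,j)" by simp
qed (use assms in auto)

lemma adj_adj[simp]: "mat_adjoint (mat_adjoint A) = (A :: complex mat)"
  by (intro eq_matI) auto

lemma adj_one[simp]: "mat_adjoint (1\<^sub>m n :: complex mat) = 1\<^sub>m n"
  by (intro eq_matI) auto

lemma adj_minus: fixes A B :: "complex mat" assumes "A \<in> carrier_mat a b" "B \<in> carrier_mat a b"
  shows "mat_adjoint (A - B) = mat_adjoint A - mat_adjoint B"
  using assms by (intro eq_matI) auto

definition msq :: "complex mat \<Rightarrow> real" where
  "msq A = (\<Sum>i<dim_row A. \<Sum>j<dim_col A. (cmod (A $$ (i, j)))\<^sup>2)"

lemma mfrob_msq: "mfrob A = sqrt (msq A)" unfolding mfrob_def msq_def ..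

lemma msq_nonneg: "msq A \<ge> 0" unfolding msq_def by (intro sum_nonneg) auto

lemma msq_complex: "complex_of_real (msq A) = (\<Sum>i<dim_row A. \<Sum>j<dim_col A. A $$ (i, j) * cnj (A $$ (i, j)))"
  unfolding msq_def of_real_sum by (intro sum.cong refl) (simp add: complex_norm_square[symmetric])

lemma msq_add_orth:
  assumes A: "A \<in> carrier_mat m n" and B: "B \<in> carrier_mat m n"
    and orth: "mat_adjoint B * A = 0\<^sub>m n n"
  shows "msq (A + B) = msq A + msq B"
proof -
  have o1: "(\<Sum>i<m. cnj (B $$ (i,j)) * A $$ (i,j)) = 0" if j: "j < n" for j
  proof -
    have "(mat_adjoint B * A) $$ (j,j) = 0" using orth j by simp
    moreover have "(mat_adjoint B * A) $$ (j,j) = (\<Sum>i<m. mat_adjoint B $$ (j,i) * A $$ (i,j))"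
      by (rule mult_entry) (use A B j in auto)
    ultimately show ?thesis using A B j by simp
  qed
  have o2: "(\<Sum>i<m. A $$ (i,j) * cnj (B $$ (i,j))) = 0" if j: "j < n" for j
    using o1[OF j] by (simp add: mult.commute)
  have o3: "(\<Sum>i<m. B $$ (i,j) * cnj (A $$ (i,j))) = 0" if j: "j < n" for j
  proof -
    have "cnj (\<Sum>i<m. A $$ (i,j) * cnj (B $$ (i,j))) = 0" using o2[OF j] by simp
    thus ?thesis by (simp add: mult.commute)
  qed
  have "complex_of_real (msq (A + B)) =
     (\<Sum>j<n. \<Sum>i<m. (A+B) $$ (i, j) * cnj ((A+B) $$ (i, j)))"
    using A B by (simp add: msq_complex sum.swap[of _ "{..<m}"])
  also have "\<dots> = (\<Sum>j<n. (\<Sum>i<m. A $$ (i, j) * cnj (A $$ (i, j))) + (\<Sum>i<m. B $$ (i, j) * cnj (B $$ (i, j)))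
       + (\<Sum>i<m. A $$ (i,j) * cnj (B $$ (i,j))) + (\<Sum>i<m. B $$ (i,j) * cnj (A $$ (i,j))))"
  proof (intro sum.cong refl)
    fix j assume j: "j \<in> {..<n}"
    have "(\<Sum>i<m. (A+B) $$ (i, j) * cnj ((A+B) $$ (i, j))) =
      (\<Sum>i<m. A $$ (i, j) * cnj (A $$ (i, j)) + B $$ (i, j) * cnj (B $$ (i, j))
        + A $$ (i,j) * cnj (B $$ (i,j)) + B $$ (i,j) * cnj (A $$ (i,j)))"
    proof (intro sum.cong refl)
      fix i assume i: "i \<in> {..<m}"
      have e: "(A+B) $$ (i, j) = A $$ (i,j) + B $$ (i,j)" using A B i j by simp
      show "(A+B) $$ (i, j) * cnj ((A+B) $$ (i, j)) = A $$ (i, j) * cnj (A $$ (i, j)) + B $$ (i, j) * cnj (B $$ (i, j))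
        + A $$ (i,j) * cnj (B $$ (i,j)) + B $$ (i,j) * cnj (A $$ (i,j))"
        unfolding e complex_cnj_add by (simp add: ring_distribs)
    qed
    then show "(\<Sum>i<m. (A+B) $$ (i, j) * cnj ((A+B) $$ (i, j))) = (\<Sum>i<m. A $$ (i, j) * cnj (A $$ (i, j))) + (\<Sum>i<m. B $$ (i, j) * cnj (B $$ (i, j)))
       + (\<Sum>i<m. A $$ (i,j) * cnj (B $$ (i,j))) + (\<Sum>i<m. B $$ (i,j) * cnj (A $$ (i,j)))"
      by (simp only: sum.distrib)
  qed
  also have "\<dots> = (\<Sum>j<n. (\<Sum>i<m. A $$ (i, j) * cnj (A $$ (i, j))) + (\<Sum>i<m. B $$ (i, j) * cnj (B $$ (i, j))))"
    using o2 o3 by (intro sum.cong refl) simp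
  also have "\<dots> = complex_of_real (msq A + msq B)"
    using A B by (simp add: msq_complex sum.swap[of _ "{..<m}"] sum.distrib)
  finally show ?thesis by (simp only: of_real_eq_iff)
qed

declare minus_carrier_mat[simp]

locale isom =
  fixes U :: "complex mat" and p r :: nat
  assumes U: "U \<in> carrier_mat p r" and UU: "mat_adjoint U * U = 1\<^sub>m r"
begin

definition "P = U * mat_adjoint U"

lemma P_carrier[simp]: "P \<in> carrier_mat p p" using U unfolding P_def by auto
lemma P_dims[simp]: "dim_row P = p" "dim_col P = p" by (metis P_carrier carrier_matD(1), metis P_carrier carrier_matD(2))
lemma Uadj[simp]: "mat_adjoint U \<in> carrier_mat r p" using U by auto

lemma P_adj: "mat_adjoint P = P"
  unfolding P_def using U by (simp add: adj_mult[of U p r "mat_adjoint U" p])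

lemma P_idem: "P * P = P"
proof -
  have "P * P = U * (mat_adjoint U * (U * mat_adjoint U))" unfolding P_def
    using U by (simp add: assoc_mult_mat[of U p r _ p _ p])
  also have "mat_adjoint U * (U * mat_adjoint U) = (mat_adjoint U * U) * mat_adjoint U"
    using U by (simp add: assoc_mult_mat[of _ r p U r _ p])
  also have "\<dots> = mat_adjoint U" using UU U by simp
  finally show ?thesis unfolding P_def .
qed

lemma Q_carrier[simp]: "1\<^sub>m p - P \<in> carrier_mat p p" by simp

lemma QP: "(1\<^sub>m p - P) * P = 0\<^sub>m p p"
proof -
  have "(1\<^sub>m p - P) * P = 1\<^sub>m p * P - P * P" by (rule minus_mult_distrib_mat[of "1\<^sub>m p" p p P P p]) auto
  also have "\<dots> = 0\<^sub>m p p" unfolding P_idem by (intro eq_matI) auto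
  finally show ?thesis .
qed

lemma QU: "(1\<^sub>m p - P) * U = 0\<^sub>m p r"
proof -
  have "(1\<^sub>m p - P) * U = 1\<^sub>m p * U - P * U" by (rule minus_mult_distrib_mat) (use U in auto)
  also have "P * U = U * (mat_adjoint U * U)" unfolding P_def using U
    by (rule assoc_mult_mat[of U p r "mat_adjoint U" p U r]) (use U in auto)
  also have "\<dots> = U" using UU U by simp
  finally show ?thesis using U by (intro eq_matI) auto
qed

lemma Q_adj: "mat_adjoint (1\<^sub>m p - P) = 1\<^sub>m p - P"
  by (subst adj_minus[of _ p p]) (auto simp: P_adj)

lemma pyth:
  assumes Z: "Z \<in> carrier_mat p q" and W: "W \<in> carrier_mat p q"
  shows "msq (P * Z + (1\<^sub>m p - P) * W) = msq (P * Z) + msq ((1\<^sub>m p - P) * W)"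
proof (rule msq_add_orth[of _ p q])
  have "mat_adjoint ((1\<^sub>m p - P) * W) = mat_adjoint W * (1\<^sub>m p - P)"
    using W by (simp add: adj_mult[of _ p p W q] Q_adj)
  moreover have "mat_adjoint W * (1\<^sub>m p - P) * (P * Z) = mat_adjoint W * ((1\<^sub>m p - P) * (P * Z))"
    by (rule assoc_mult_mat[of "mat_adjoint W" q p "1\<^sub>m p - P" p "P*Z" q]) (use W Z in auto)
  ultimately have "mat_adjoint ((1\<^sub>m p - P) * W) * (P * Z) = mat_adjoint W * ((1\<^sub>m p - P) * (P * Z))"
    by simp
  also have "(1\<^sub>m p - P) * (P * Z) = ((1\<^sub>m p - P) * P) * Z"
    using Z by (simp add: assoc_mult_mat[of "1\<^sub>m p - P" p p P p Z q])
  also have "mat_adjoint W * (((1\<^sub>m p - P) * P) * Z) = 0\<^sub>m q q" unfolding QP using W Z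
    by (simp add: left_mult_zero_mat[of Z p q p] right_mult_zero_mat[of "mat_adjoint W" q p q] del: left_mult_zero_mat' right_mult_zero_mat')
  finally show "mat_adjoint ((1\<^sub>m p - P) * W) * (P * Z) = 0\<^sub>m q q" .
qed (use Z W in auto)

lemma split_id: assumes Z: "Z \<in> carrier_mat p q" shows "P * Z + (1\<^sub>m p - P) * Z = Z"
proof -
  have "(1\<^sub>m p - P) * Z = 1\<^sub>m p * Z - P * Z" by (rule minus_mult_distrib_mat) (use Z in auto)
  thus ?thesis using Z by (intro eq_matI) auto
qed

lemma msq_P_le: assumes Z: "Z \<in> carrier_mat p q" shows "msq (P * Z) \<le> msq Z"
  using pyth[OF Z Z] split_id[OF Z] msq_nonneg[of "(1\<^sub>m p - P) * Z"] by simp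

lemma msq_Q_le: assumes Z: "Z \<in> carrier_mat p q" shows "msq ((1\<^sub>m p - P) * Z) \<le> msq Z"
  using pyth[OF Z Z] split_id[OF Z] msq_nonneg[of "P * Z"] by simp

lemma step:
  assumes M: "M \<in> carrier_mat p q" and Z: "Z \<in> carrier_mat p q" and V: "V \<in> carrier_mat q r"
  shows "msq (M - P * Z) \<le> msq (M - U * mat_adjoint V) + msq (M - Z)"
proof -
  have MZ: "M - Z \<in> carrier_mat p q" using M Z by simp
  have UV: "U * mat_adjoint V \<in> carrier_mat p q" using U V by simp
  have MUV: "M - U * mat_adjoint V \<in> carrier_mat p q" using M UV by simp
  have e1: "P * (M - Z) = P * M - P * Z" by (rule mult_minus_distrib_mat) (use M Z in auto)
  have e2: "(1\<^sub>m p - P) * M = 1\<^sub>m p * M - P * M" by (rule minus_mult_distrib_mat) (use M in auto)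
  have e3: "(1\<^sub>m p - P) * (M - U * mat_adjoint V) = (1\<^sub>m p - P) * M - (1\<^sub>m p - P) * (U * mat_adjoint V)"
    by (rule mult_minus_distrib_mat) (use M UV in auto)
  have e4: "(1\<^sub>m p - P) * (U * mat_adjoint V) = 0\<^sub>m p q"
    using U V by (simp add: assoc_mult_mat[of _ p p U r _ q, symmetric] QU)
  have "M - P * Z = P * (M - Z) + (1\<^sub>m p - P) * (M - U * mat_adjoint V)"
    unfolding e1 e3 e4 e2 using M Z by (intro eq_matI) auto
  hence "msq (M - P * Z) = msq (P * (M - Z)) + msq ((1\<^sub>m p - P) * (M - U * mat_adjoint V))"
    using pyth[OF MZ MUV] by simp
  also have "\<dots> \<le> msq (M - Z) + msq (M - U * mat_adjoint V)"
    using msq_P_le[OF MZ] msq_Q_le[OF MUV] by simp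
  finally show ?thesis by simp
qed

end

lemma pdim_0[simp]: "pdim n 0 = 1" unfolding pdim_def by simp
lemma pdim_Suc: "pdim n (Suc k) = pdim n k * n (Suc k)"
  unfolding pdim_def by (simp add: prod.nat_ivl_Suc')

lemma pdim_split: "k \<le> j \<Longrightarrow> pdim n j = pdim n k * (\<Prod>s=k+1..j. n s)"
proof (induction j)
  case 0 thus ?case by simp
next
  case (Suc j)
  show ?case
  proof (cases "k = Suc j")
    case True thus ?thesis by simp
  next
    case False
    hence "k \<le> j" using Suc by simp
    thus ?thesis using Suc.IH by (simp add: pdim_Suc prod.nat_ivl_Suc' mult.assoc)
  qed
qed

lemma pdim_qdim: "k \<le> d \<Longrightarrow> pdim n d = pdim n k * qdim n d k"
  unfolding qdim_def by (rule pdim_split)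

lemma qdim_last: "1 \<le> d \<Longrightarrow> qdim n d (d - 1) = n d"
  unfolding qdim_def by simp

lemma length_mindex[simp]: "length (mindex n d l) = d" unfolding mindex_def by simp
lemma mindex_nth: "j < d \<Longrightarrow> mindex n d l ! j = (l div pdim n j) mod n (j + 1)"
  unfolding mindex_def by simp

lemma div_indep:
  assumes a: "a < pdim n k" and kj: "k \<le> j"
  shows "(a + pdim n k * c) div pdim n j = c div (\<Prod>s=k+1..j. n s)"
proof -
  have pos: "pdim n k > 0" using a by simp
  have "(a + pdim n k * c) div pdim n k = c" using a pos by simp
  thus ?thesis unfolding pdim_split[OF kj] by (simp add: div_mult2_eq)
qed

lemma mod_next:
  assumes a: "a < pdim n k"
  shows "(a + pdim n k * c) mod pdim n (Suc k) = a + pdim n k * (c mod n (Suc k))"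
proof -
  have pos: "pdim n k > 0" using a by simp
  have "(a + pdim n k * c) mod (pdim n k * n (Suc k)) =
      pdim n k * ((a + pdim n k * c) div pdim n k mod n (Suc k)) + (a + pdim n k * c) mod pdim n k"
    by (rule mod_mult2_eq)
  also have "(a + pdim n k * c) div pdim n k = c" using a pos by simp
  also have "(a + pdim n k * c) mod pdim n k = a" using a by simp
  finally show ?thesis unfolding pdim_Suc by simp
qed

lemma lin_bound: "a < (P::nat) \<Longrightarrow> c < Q \<Longrightarrow> a + P * c < P * Q"
proof -
  assume ac: "a < P" "c < Q"
  have "a + P * c < P + P * c" using ac by simp
  also have "\<dots> = P * (Suc c)" by simp
  also have "\<dots> \<le> P * Q" using ac by (intro mult_le_mono2) simp
  finally show ?thesis .
qed

lemma lin_div_bound: "l < P * (Q::nat) \<Longrightarrow> l div P < Q"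
  by (metis div_less_iff_less_mult mult.commute mult_zero_left not_less_zero zero_less_iff_neq_zero)

lemma lin_mod_bound: "l < P * (Q::nat) \<Longrightarrow> l mod P < P"
  by (cases "P = 0") auto

lemma sum_pair_reindex:
  fixes h :: "nat \<Rightarrow> 'b::comm_monoid_add"
  shows "(\<Sum>l<P * Q. h l) = (\<Sum>a<P. \<Sum>c<Q. h (a + P * c))"
proof -
  have "(\<Sum>a<P. \<Sum>c<Q. h (a + P * c)) = (\<Sum>(a,c)\<in>{..<P}\<times>{..<Q}. h (a + P * c))"
    by (simp add: sum.cartesian_product)
  also have "\<dots> = (\<Sum>l<P * Q. h l)"
    apply (rule sum.reindex_bij_witness[of _ "\<lambda>l. (l mod P, l div P)" "\<lambda>(a,c). a + P*c"])
    apply (auto simp: lin_bound lin_div_bound lin_mod_bound)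
    done
  finally show ?thesis ..
qed

lemma mindex_Suc: "mindex n (Suc d) l = mindex n d l @ [(l div pdim n d) mod n (Suc d)]"
  unfolding mindex_def by simp

lemma mindex_shift:
  assumes a: "a < pdim n d"
  shows "mindex n d (a + pdim n d * i) = mindex n d a"
proof (rule nth_equalityI)
  fix j assume "j < length (mindex n d (a + pdim n d * i))"
  hence j: "j < d" by simp
  have pos: "pdim n j > 0" using a pdim_split[of j d n] j by (cases "pdim n j = 0") auto
  define R where "R = (\<Prod>s=j+2..d. n s)"
  have "(\<Prod>s=j+1..d. n s) = n (j+1) * R" unfolding R_def using j
    by (subst prod.atLeast_Suc_atMost) auto
  hence pd: "pdim n d = pdim n j * (n (j+1) * R)" using pdim_split[of j d n] j by simp
  have "(a + pdim n d * i) div pdim n j = a div pdim n j + n (j+1) * (R * i)"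
    unfolding pd using pos by (simp add: mult.assoc)
  hence "(a + pdim n d * i) div pdim n j mod n (j+1) = a div pdim n j mod n (j+1)" by simp
  thus "mindex n d (a + pdim n d * i) ! j = mindex n d a ! j" using j by (simp add: mindex_nth)
qed simp

lemma tidx_Suc: "tidx n (Suc d) = (\<lambda>(ix,i). ix @ [i]) ` (tidx n d \<times> {..<n (Suc d)})"
proof (rule equalityI; rule subsetI)
  fix ix assume "ix \<in> tidx n (Suc d)"
  hence ix: "length ix = Suc d" "\<And>k. k < Suc d \<Longrightarrow> ix ! k < n (k+1)" unfolding tidx_def by auto
  have "ix = butlast ix @ [last ix]" using ix by (metis append_butlast_last_id length_0_conv nat.distinct(1))
  moreover have "butlast ix \<in> tidx n d" using ix unfolding tidx_def by (auto simp: nth_butlast)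
  moreover have "last ix < n (Suc d)" using ix(2)[of d] ix(1) by (metis diff_Suc_1 last_conv_nth length_0_conv lessI nat.distinct(1) Suc_eq_plus1)
  ultimately show "ix \<in> (\<lambda>(ix,i). ix @ [i]) ` (tidx n d \<times> {..<n (Suc d)})" by force
next
  fix ix assume "ix \<in> (\<lambda>(ix,i). ix @ [i]) ` (tidx n d \<times> {..<n (Suc d)})"
  then obtain jx i where "ix = jx @ [i]" "jx \<in> tidx n d" "i < n (Suc d)" by auto
  thus "ix \<in> tidx n (Suc d)" unfolding tidx_def by (auto simp: nth_append less_Suc_eq)
qed

lemma tidx_sum:
  fixes g :: "nat list \<Rightarrow> 'b::comm_monoid_add"
  shows "(\<Sum>ix\<in>tidx n d. g ix) = (\<Sum>l<pdim n d. g (mindex n d l))"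
proof (induction d arbitrary: g)
  case 0
  have "tidx n 0 = {[]}" unfolding tidx_def by auto
  thus ?case by (simp add: mindex_def)
next
  case (Suc d)
  have inj: "inj_on (\<lambda>(ix,i). ix @ [i]) (tidx n d \<times> {..<n (Suc d)})"
    by (auto simp: inj_on_def)
  have "(\<Sum>ix\<in>tidx n (Suc d). g ix) = (\<Sum>(ix,i)\<in>tidx n d \<times> {..<n (Suc d)}. g (ix @ [i]))"
    unfolding tidx_Suc by (subst sum.reindex[OF inj]) (simp add: case_prod_beta)
  also have "\<dots> = (\<Sum>ix\<in>tidx n d. \<Sum>i<n (Suc d). g (ix @ [i]))" by (simp add: sum.cartesian_product)
  also have "\<dots> = (\<Sum>a<pdim n d. \<Sum>i<n (Suc d). g (mindex n d a @ [i]))" by (rule Suc.IH)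
  also have "\<dots> = (\<Sum>a<pdim n d. \<Sum>i<n (Suc d). g (mindex n (Suc d) (a + pdim n d * i)))"
  proof (intro sum.cong refl)
    fix a i assume a: "a \<in> {..<pdim n d}" and i: "i \<in> {..<n (Suc d)}"
    have pos: "pdim n d > 0" using a by auto
    have "mindex n (Suc d) (a + pdim n d * i) = mindex n d a @ [i]"
      unfolding mindex_Suc mindex_shift[of a n d i, OF a[simplified]] using pos a i by simp
    thus "g (mindex n d a @ [i]) = g (mindex n (Suc d) (a + pdim n d * i))" by simp
  qed
  also have "\<dots> = (\<Sum>l<pdim n (Suc d). g (mindex n (Suc d) l))"
    unfolding pdim_Suc by (rule sum_pair_reindex[symmetric])
  finally show ?case .
qed

definition um :: "(nat \<Rightarrow> nat) \<Rightarrow> nat \<Rightarrow> nat \<Rightarrow> (nat \<Rightarrow> complex) \<Rightarrow> complex mat" where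
  "um n d k v = mat (pdim n k) (qdim n d k) (\<lambda>(a, b). v (a + pdim n k * b))"

lemma um_carrier[simp]: "um n d k v \<in> carrier_mat (pdim n k) (qdim n d k)" unfolding um_def by simp

lemma um_dims[simp]: "dim_row (um n d k v) = pdim n k" "dim_col (um n d k v) = qdim n d k"
  unfolding um_def by simp_all

lemma tunfold_um: "tunfold n d X k = um n d k (\<lambda>l. X (mindex n d l))"
  unfolding tunfold_def um_def ..

lemma um_minus: "um n d k (\<lambda>l. v l - w l) = um n d k v - um n d k w"
  unfolding um_def by (intro eq_matI) auto

lemma msq_um: "k \<le> d \<Longrightarrow> msq (um n d k v) = (\<Sum>l<pdim n d. (cmod (v l))\<^sup>2)"
  unfolding msq_def um_def using pdim_qdim[of k d n] by (simp add: sum_pair_reindex)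

lemma tfrob_sum: "tfrob n d T = sqrt (\<Sum>l<pdim n d. (cmod (T (mindex n d l)))\<^sup>2)"
  unfolding tfrob_def by (simp add: tidx_sum)

lemma foldl_assoc_carrier:
  fixes S :: "nat \<Rightarrow> complex mat" and s :: "nat \<Rightarrow> nat"
  assumes S: "\<And>k. S k \<in> carrier_mat (s (k-1)) (s k)" and m: "1 \<le> m"
  shows "m \<le> e \<Longrightarrow> B \<in> carrier_mat b (s (m-1)) \<Longrightarrow>
    foldl (\<lambda>P k. P * S k) B [m..<e] \<in> carrier_mat b (s (e-1)) \<and>
    (\<forall>(A::complex mat) a. A \<in> carrier_mat a b \<longrightarrow> foldl (\<lambda>P k. P * S k) (A * B) [m..<e] = A * foldl (\<lambda>P k. P * S k) B [m..<e])"
proof (induction e)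
  case 0 thus ?case using m by simp
next
  case (Suc e)
  show ?case
  proof (cases "m = Suc e")
    case True thus ?thesis using Suc.prems by simp
  next
    case False
    hence me: "m \<le> e" using Suc.prems by simp
    have IH: "foldl (\<lambda>P k. P * S k) B [m..<e] \<in> carrier_mat b (s (e-1))"
      "\<And>A a. A \<in> carrier_mat a b \<Longrightarrow> foldl (\<lambda>P k. P * S k) (A * B) [m..<e] = A * foldl (\<lambda>P k. P * S k) B [m..<e]"
      using Suc.IH[OF me Suc.prems(2)] by auto
    have Se: "S e \<in> carrier_mat (s (e-1)) (s e)" by (rule S)
    show ?thesis
    proof (intro conjI allI impI)
      show "foldl (\<lambda>P k. P * S k) B [m..<Suc e] \<in> carrier_mat b (s (Suc e - 1))"
        using me IH(1) Se by simp
      fix A :: "complex mat" and a assume A: "A \<in> carrier_mat a b"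
      have "foldl (\<lambda>P k. P * S k) (A * B) [m..<Suc e] = (A * foldl (\<lambda>P k. P * S k) B [m..<e]) * S e"
        using me IH(2)[OF A] by simp
      also have "\<dots> = A * (foldl (\<lambda>P k. P * S k) B [m..<e] * S e)"
        by (rule assoc_mult_mat[OF A IH(1) Se])
      also have "\<dots> = A * foldl (\<lambda>P k. P * S k) B [m..<Suc e]" using me by simp
      finally show "foldl (\<lambda>P k. P * S k) (A * B) [m..<Suc e] = A * foldl (\<lambda>P k. P * S k) B [m..<Suc e]" .
    qed
  qed
qed

lemma core_slice_carrier[simp]: "core_slice G s t i \<in> carrier_mat s t"
  unfolding core_slice_def by simp

lemma core_slice_index[simp]: "a < s \<Longrightarrow> b < t \<Longrightarrow> core_slice G s t i $$ (a, b) = G a i b"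
  unfolding core_slice_def by simp

lemma vecm_lin: "dim_row M = s \<Longrightarrow> b < s \<Longrightarrow> vecm M (b + s * x) = M $$ (b, x)"
  unfolding vecm_def by simp

context
  fixes n :: "nat \<Rightarrow> nat" and d :: nat and r :: "nat \<Rightarrow> nat" and U V :: "nat \<Rightarrow> complex mat"
begin

definition "Sl k ix = core_slice (tt_cores n d r U V k) (r (k - 1)) (r k) (ix ! (k - 1))"
definition "Rt j ix = foldl (\<lambda>P k. P * Sl k ix) (1\<^sub>m (r j)) [Suc j..<Suc d]"
definition "yv k l = (\<Sum>b<r k. U k $$ (l mod pdim n k, b) * Rt k (mindex n d l) $$ (b, 0))"

lemma Sl_carrier[simp]: "Sl k ix \<in> carrier_mat (r (k - 1)) (r k)"
  unfolding Sl_def by simp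

lemma Rt_carrier: "j \<le> d \<Longrightarrow> Rt j ix \<in> carrier_mat (r j) (r d)"
  unfolding Rt_def using foldl_assoc_carrier[of "\<lambda>k. Sl k ix" r "Suc j" "Suc d" "1\<^sub>m (r j)" "r j", OF Sl_carrier]
  by (simp del: upt_Suc)

lemma Rt_d: "Rt d ix = 1\<^sub>m (r d)" unfolding Rt_def by simp

lemma Rt_Suc: assumes j: "j < d" shows "Rt j ix = Sl (Suc j) ix * Rt (Suc j) ix"
proof -
  have "Rt j ix = foldl (\<lambda>P k. P * Sl k ix) (1\<^sub>m (r j) * Sl (Suc j) ix) [Suc (Suc j)..<Suc d]"
    unfolding Rt_def using j by (simp add: upt_conv_Cons del: upt_Suc)
  also have "1\<^sub>m (r j) * Sl (Suc j) ix = Sl (Suc j) ix * 1\<^sub>m (r (Suc j))"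
  proof -
    have c: "Sl (Suc j) ix \<in> carrier_mat (r j) (r (Suc j))" using Sl_carrier[of "Suc j" ix] by simp
    show ?thesis using left_mult_one_mat[OF c] right_mult_one_mat[OF c] by simp
  qed
  also have "foldl (\<lambda>P k. P * Sl k ix) (Sl (Suc j) ix * 1\<^sub>m (r (Suc j))) [Suc (Suc j)..<Suc d]
       = Sl (Suc j) ix * Rt (Suc j) ix"
  proof -
    have F: "\<forall>(A::complex mat) a. A \<in> carrier_mat a (r (Suc j)) \<longrightarrow>
      foldl (\<lambda>P k. P * Sl k ix) (A * 1\<^sub>m (r (Suc j))) [Suc (Suc j)..<Suc d] = A * foldl (\<lambda>P k. P * Sl k ix) (1\<^sub>m (r (Suc j))) [Suc (Suc j)..<Suc d]"
      using foldl_assoc_carrier[of "\<lambda>k. Sl k ix" r "Suc (Suc j)" "Suc d" "1\<^sub>m (r (Suc j))" "r (Suc j)", OF Sl_carrier] j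
      by (simp del: upt_Suc right_mult_one_mat')
    have c: "Sl (Suc j) ix \<in> carrier_mat (r j) (r (Suc j))" using Sl_carrier[of "Suc j" ix] by simp
    show ?thesis unfolding Rt_def using F c by blast
  qed
  finally show ?thesis .
qed

lemma Rt_cong: assumes "\<And>p. j \<le> p \<Longrightarrow> p < d \<Longrightarrow> ix ! p = ix' ! p"
  shows "Rt j ix = Rt j ix'"
  unfolding Rt_def Sl_def
  by (rule foldl_cong) (use assms in \<open>auto simp: Suc_le_eq\<close>)

lemma tt_Rt0: "tt_tensor (tt_cores n d r U V) r d ix = Rt 0 ix $$ (0, 0)"
  unfolding tt_tensor_def Rt_def Sl_def by simp

end

lemma pdim_1[simp]: "pdim n (Suc 0) = n (Suc 0)" using pdim_Suc[of n 0] by simp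

lemma um_index[simp]: "a < pdim n k \<Longrightarrow> c < qdim n d k \<Longrightarrow> um n d k v $$ (a, c) = v (a + pdim n k * c)"
  unfolding um_def by simp

context
  fixes n :: "nat \<Rightarrow> nat" and d :: nat and r :: "nat \<Rightarrow> nat" and U V :: "nat \<Rightarrow> complex mat"
  assumes d2: "d \<ge> 2" and r0: "r 0 = 1" and rd: "r d = 1"
   and Uc: "\<And>j. 1 \<le> j \<Longrightarrow> j \<le> d - 1 \<Longrightarrow> U j \<in> carrier_mat (pdim n j) (r j)"
   and Vc: "\<And>j. 1 \<le> j \<Longrightarrow> j \<le> d - 1 \<Longrightarrow> V j \<in> carrier_mat (qdim n d j) (r j)"
begin

lemma y1: assumes l: "l < pdim n d"
  shows "tt_tensor (tt_cores n d r U V) r d (mindex n d l) = yv n d r U V 1 l"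
proof -
  define ix where "ix = mindex n d l"
  have "pdim n d = pdim n 1 * (\<Prod>s=1+1..d. n s)" using d2 by (intro pdim_split) simp
  hence n1: "n 1 > 0" using l by (cases "n 1 = 0") auto
  have U1: "U 1 \<in> carrier_mat (n 1) (r 1)" using Uc[of 1] d2 by simp
  have i: "ix ! 0 = l mod n 1" unfolding ix_def using d2 by (simp add: mindex_nth)
  have "tt_tensor (tt_cores n d r U V) r d ix = (Sl n d r U V 1 ix * Rt n d r U V 1 ix) $$ (0, 0)"
    unfolding tt_Rt0 using Rt_Suc[of 0 d] d2 by simp
  also have "\<dots> = (\<Sum>b<r 1. Sl n d r U V 1 ix $$ (0, b) * Rt n d r U V 1 ix $$ (b, 0))"
    by (rule mult_entry[of _ 1 "r 1" _ 1]) (use Sl_carrier[of n d r U V 1 ix] Rt_carrier[of 1 d n r U V ix] d2 r0 rd in auto)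
  also have "\<dots> = (\<Sum>b<r 1. U 1 $$ (l mod n 1, b) * Rt n d r U V 1 ix $$ (b, 0))"
  proof (intro sum.cong refl)
    fix b assume b: "b \<in> {..<r 1}"
    have "Sl n d r U V 1 ix $$ (0, b) = tt_cores n d r U V 1 0 (l mod n 1) b"
      unfolding Sl_def using b r0 i by simp
    also have "\<dots> = vecm (U 1) (l mod n 1 + n 1 * b)"
      unfolding tt_cores_def reshape3_def by simp
    also have "\<dots> = U 1 $$ (l mod n 1, b)" using U1 n1 by (intro vecm_lin) auto
    finally show "Sl n d r U V 1 ix $$ (0, b) * Rt n d r U V 1 ix $$ (b, 0) = U 1 $$ (l mod n 1, b) * Rt n d r U V 1 ix $$ (b, 0)" by simp
  qed
  finally show ?thesis unfolding yv_def ix_def by simp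
qed

lemma y2: "um n d (d - 1) (yv n d r U V (d - 1)) = U (d - 1) * mat_adjoint (V (d - 1))"
proof -
  define k where "k = d - 1"
  have k: "1 \<le> k" "Suc k = d" "k < d" using d2 unfolding k_def by auto
  have Uk: "U k \<in> carrier_mat (pdim n k) (r k)" using Uc[of k] k unfolding k_def by simp
  have Vk: "V k \<in> carrier_mat (n d) (r k)" using Vc[of k] k qdim_last[of d n] d2 unfolding k_def by simp
  have qk: "qdim n d k = n d" using qdim_last[of d n] d2 unfolding k_def by simp
  show ?thesis unfolding k_def[symmetric]
  proof (rule eq_matI)
    fix a c assume "a < dim_row (U k * mat_adjoint (V k))" "c < dim_col (U k * mat_adjoint (V k))"
    hence a: "a < pdim n k" and c: "c < n d" using Uk Vk by auto
    define ix where "ix = mindex n d (a + pdim n k * c)"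
    have am: "(a + pdim n k * c) mod pdim n k = a" using a by simp
    have pos: "pdim n k > 0" using a by simp
    have dk: "d - 1 = k" using k_def by simp
    have "ix ! k = c" unfolding ix_def using k a c pos
      by (simp add: mindex_nth)
    hence i: "ix ! (d - 1) = c" unfolding dk .
    have Rt: "Rt n d r U V k ix = Sl n d r U V d ix"
      using Rt_Suc[of k d] k Rt_d[of n d r U V ix] rd Sl_carrier[of n d r U V d ix] by simp
    have "um n d k (yv n d r U V k) $$ (a, c) = (\<Sum>b<r k. U k $$ (a, b) * Sl n d r U V d ix $$ (b, 0))"
      using a c qk by (simp add: yv_def am ix_def[symmetric] Rt)
    also have "\<dots> = (\<Sum>b<r k. U k $$ (a, b) * mat_adjoint (V k) $$ (b, c))"
    proof (intro sum.cong refl)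
      fix b assume b: "b \<in> {..<r k}"
      have "Sl n d r U V d ix $$ (b, 0) = tt_cores n d r U V d b c 0"
        unfolding Sl_def using b rd i k by (simp add: k_def)
      also have "\<dots> = vecm (mat_adjoint (V k)) (b + r k * c)"
        unfolding tt_cores_def reshape3_def using k d2 by (simp add: k_def)
      also have "\<dots> = mat_adjoint (V k) $$ (b, c)" using Vk b by (intro vecm_lin) auto
      finally show "U k $$ (a, b) * Sl n d r U V d ix $$ (b, 0) = U k $$ (a, b) * mat_adjoint (V k) $$ (b, c)" by simp
    qed
    also have "\<dots> = (U k * mat_adjoint (V k)) $$ (a, c)"
      by (rule mult_entry[symmetric]) (use Uk Vk a c in auto)
    finally show "um n d k (yv n d r U V k) $$ (a, c) = (U k * mat_adjoint (V k)) $$ (a, c)" .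
  qed (use Uk Vk qk in auto)
qed


lemma y3: assumes k1: "1 \<le> k" and kd: "Suc k \<le> d - 1"
  shows "um n d k (yv n d r U V k) = (U k * mat_adjoint (U k)) * um n d k (yv n d r U V (Suc k))"
proof -
  define P where "P = pdim n k"
  define m where "m = n (Suc k)"
  have Uk: "U k \<in> carrier_mat P (r k)" using Uc[of k] k1 kd unfolding P_def by simp
  have Uk1: "U (Suc k) \<in> carrier_mat (P * m) (r (Suc k))" using Uc[of "Suc k"] k1 kd unfolding P_def m_def
    by (simp add: pdim_Suc)
  have UU: "U k * mat_adjoint (U k) \<in> carrier_mat P P" using Uk by simp
  show ?thesis
  proof (rule eq_matI)
    fix a c assume "a < dim_row (U k * mat_adjoint (U k) * um n d k (yv n d r U V (Suc k)))"
      "c < dim_col (U k * mat_adjoint (U k) * um n d k (yv n d r U V (Suc k)))"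
    hence a: "a < P" and c: "c < qdim n d k" using Uk unfolding P_def by auto
    have pos: "P > 0" using a by simp
    define i where "i = c mod m"
    have m: "m > 0"
    proof -
      have "pdim n d = pdim n k * qdim n d k" using kd by (intro pdim_qdim) simp
      also have "qdim n d k = n (Suc k) * (\<Prod>s=Suc k+1..d. n s)" unfolding qdim_def using kd
        by (subst prod.atLeast_Suc_atMost) auto
      finally have "qdim n d k = m * (\<Prod>s=Suc k+1..d. n s)" unfolding m_def
        using \<open>qdim n d k = n (Suc k) * (\<Prod>s=Suc k+1..d. n s)\<close> by simp
      thus ?thesis using c by (cases "m = 0") auto
    qed
    have im: "i < m" unfolding i_def using m by simp
    define ix where "ix = mindex n d (a + P * c)"
    define R where "R b' = Rt n d r U V (Suc k) ix $$ (b', 0)" for b'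
    have am: "(a + P * c) mod P = a" using a by simp
    have ixk: "ix ! k = i" unfolding ix_def i_def m_def P_def using kd a pos
      by (simp add: mindex_nth P_def)
    have Rq: "Rt n d r U V (Suc k) (mindex n d (q + P * c)) = Rt n d r U V (Suc k) ix" if q: "q < P" for q
      unfolding ix_def
    proof (rule Rt_cong)
      fix p assume p: "Suc k \<le> p" "p < d"
      have "(q + P * c) div pdim n p = (a + P * c) div pdim n p"
        using div_indep[of q n k p c] div_indep[of a n k p c] q a p unfolding P_def by simp
      thus "mindex n d (q + P * c) ! p = mindex n d (a + P * c) ! p" using p by (simp add: mindex_nth)
    qed
    have qmod: "(q + P * c) mod pdim n (Suc k) = q + P * i" if q: "q < P" for q
      using mod_next[of q n k c] q unfolding P_def i_def m_def by simp
    have Sl: "Sl n d r U V (Suc k) ix $$ (b, b') = (\<Sum>q<P. cnj (U k $$ (q, b)) * U (Suc k) $$ (q + P * i, b'))"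
      if b: "b < r k" and b': "b' < r (Suc k)" for b b'
    proof -
      define Rm where "Rm = reshape_mat (U (Suc k)) P (m * r (Suc k))"
      have Rm: "Rm \<in> carrier_mat P (m * r (Suc k))" unfolding Rm_def reshape_mat_def by simp
      have ib: "i + m * b' < m * r (Suc k)" using lin_bound[OF im b'] by (simp add: mult.commute)
      have "Sl n d r U V (Suc k) ix $$ (b, b') = tt_cores n d r U V (Suc k) b i b'"
        unfolding Sl_def using b b' ixk by simp
      also have "\<dots> = vecm (mat_adjoint (U k) * Rm) (b + r k * (i + m * b'))"
      proof -
        have ne: "Suc k \<noteq> d" "Suc k \<noteq> 1" using k1 kd by auto
        show ?thesis unfolding tt_cores_def reshape3_def Rm_def P_def m_def using ne
          by (simp add: algebra_simps)
      qed
      also have "\<dots> = (mat_adjoint (U k) * Rm) $$ (b, i + m * b')"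
        using Uk Rm b by (intro vecm_lin) auto
      also have "\<dots> = (\<Sum>q<P. mat_adjoint (U k) $$ (b, q) * Rm $$ (q, i + m * b'))"
        by (rule mult_entry) (use Uk Rm b ib in auto)
      also have "\<dots> = (\<Sum>q<P. cnj (U k $$ (q, b)) * U (Suc k) $$ (q + P * i, b'))"
      proof (intro sum.cong refl)
        fix q assume q: "q \<in> {..<P}"
        have "Rm $$ (q, i + m * b') = vecm (U (Suc k)) ((q + P * i) + (P * m) * b')"
          unfolding Rm_def reshape_mat_def using q ib by (simp add: algebra_simps)
        also have "\<dots> = U (Suc k) $$ (q + P * i, b')"
          using Uk1 lin_bound[of q P i m] q im by (intro vecm_lin) auto
        finally show "mat_adjoint (U k) $$ (b, q) * Rm $$ (q, i + m * b') = cnj (U k $$ (q, b)) * U (Suc k) $$ (q + P * i, b')"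
          using Uk q b by simp
      qed
      finally show ?thesis .
    qed
    define g where "g b b' q = U k $$ (a, b) * (cnj (U k $$ (q, b)) * (U (Suc k) $$ (q + P * i, b') * R b'))" for b b' q
    have Rtk: "Rt n d r U V k ix = Sl n d r U V (Suc k) ix * Rt n d r U V (Suc k) ix"
      using Rt_Suc[of k d] kd by simp
    have Rc: "Rt n d r U V (Suc k) ix \<in> carrier_mat (r (Suc k)) 1"
      using Rt_carrier[of "Suc k" d n r U V ix] kd rd by auto
    have Sc: "Sl n d r U V (Suc k) ix \<in> carrier_mat (r k) (r (Suc k))" using Sl_carrier[of n d r U V "Suc k" ix] by simp
    have "um n d k (yv n d r U V k) $$ (a, c) = (\<Sum>b<r k. U k $$ (a, b) * Rt n d r U V k ix $$ (b, 0))"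
      using a c unfolding P_def by (simp add: yv_def am[unfolded P_def] ix_def[unfolded P_def, symmetric])
    also have "\<dots> = (\<Sum>b<r k. \<Sum>b'<r (Suc k). \<Sum>q<P. g b b' q)"
    proof (intro sum.cong refl)
      fix b assume b: "b \<in> {..<r k}"
      have "Rt n d r U V k ix $$ (b, 0) = (\<Sum>b'<r (Suc k). Sl n d r U V (Suc k) ix $$ (b, b') * R b')"
        unfolding Rtk R_def by (rule mult_entry) (use Sc Rc b in auto)
      also have "\<dots> = (\<Sum>b'<r (Suc k). (\<Sum>q<P. cnj (U k $$ (q, b)) * U (Suc k) $$ (q + P * i, b')) * R b')"
        using b Sl by simp
      finally show "U k $$ (a, b) * Rt n d r U V k ix $$ (b, 0) = (\<Sum>b'<r (Suc k). \<Sum>q<P. g b b' q)"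
        unfolding g_def by (simp add: sum_distrib_left sum_distrib_right mult.assoc)
    qed
    also have "\<dots> = (\<Sum>b<r k. \<Sum>q<P. \<Sum>b'<r (Suc k). g b b' q)"
      by (rule sum.cong[OF refl], rule sum.swap)
    also have "\<dots> = (\<Sum>q<P. \<Sum>b<r k. \<Sum>b'<r (Suc k). g b b' q)"
      by (rule sum.swap)
    also have "\<dots> = (\<Sum>q<P. (U k * mat_adjoint (U k)) $$ (a, q) * yv n d r U V (Suc k) (q + P * c))"
    proof (intro sum.cong refl)
      fix q assume q: "q \<in> {..<P}"
      have e1: "(U k * mat_adjoint (U k)) $$ (a, q) = (\<Sum>b<r k. U k $$ (a, b) * cnj (U k $$ (q, b)))"
      proof -
        have "(U k * mat_adjoint (U k)) $$ (a, q) = (\<Sum>b<r k. U k $$ (a, b) * mat_adjoint (U k) $$ (b, q))"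
          by (rule mult_entry) (use Uk a q in auto)
        thus ?thesis using Uk q by simp
      qed
      have e2: "yv n d r U V (Suc k) (q + P * c) = (\<Sum>b'<r (Suc k). U (Suc k) $$ (q + P * i, b') * R b')"
        unfolding yv_def R_def using q qmod[of q] Rq[of q] unfolding P_def by simp
      show "(\<Sum>b<r k. \<Sum>b'<r (Suc k). g b b' q) = (U k * mat_adjoint (U k)) $$ (a, q) * yv n d r U V (Suc k) (q + P * c)"
        unfolding e1 e2 g_def by (simp add: sum_distrib_left sum_distrib_right mult.assoc sum.swap[of _ "{..<r k}"])
    qed
    also have "\<dots> = (U k * mat_adjoint (U k) * um n d k (yv n d r U V (Suc k))) $$ (a, c)"
    proof -
      have "(U k * mat_adjoint (U k) * um n d k (yv n d r U V (Suc k))) $$ (a, c) =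
        (\<Sum>q<P. (U k * mat_adjoint (U k)) $$ (a, q) * um n d k (yv n d r U V (Suc k)) $$ (q, c))"
        by (rule mult_entry) (use UU a c in \<open>auto simp: P_def\<close>)
      also have "\<dots> = (\<Sum>q<P. (U k * mat_adjoint (U k)) $$ (a, q) * yv n d r U V (Suc k) (q + P * c))"
        by (intro sum.cong refl) (use c in \<open>simp add: P_def\<close>)
      finally show ?thesis by simp
    qed
    finally show "um n d k (yv n d r U V k) $$ (a, c) = (U k * mat_adjoint (U k) * um n d k (yv n d r U V (Suc k))) $$ (a, c)" .
  qed (use Uk in \<open>auto simp: P_def\<close>)
qed

end

theorem theorem3p2:
  fixes d :: nat and n r :: "nat \<Rightarrow> nat" and X :: "nat list \<Rightarrow> complex"
    and \<epsilon> :: real and U V :: "nat \<Rightarrow> complex mat"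
  assumes "d \<ge> 2"
    and "0 < \<epsilon>" and "\<epsilon> < 1"
    and "r 0 = 1" and "r d = 1"
    and "\<And>j. 1 \<le> j \<Longrightarrow> j \<le> d - 1 \<Longrightarrow> U j \<in> carrier_mat (pdim n j) (r j)"
    and "\<And>j. 1 \<le> j \<Longrightarrow> j \<le> d - 1 \<Longrightarrow> mat_adjoint (U j) * U j = 1\<^sub>m (r j)"
    and "\<And>j. 1 \<le> j \<Longrightarrow> j \<le> d - 1 \<Longrightarrow> V j \<in> carrier_mat (qdim n d j) (r j)"
    and "\<And>j. 1 \<le> j \<Longrightarrow> j \<le> d - 1 \<Longrightarrow>
           mfrob (tunfold n d X j - U j * mat_adjoint (V j)) \<le> \<epsilon> / sqrt (real (d - 1)) * tfrob n d X"
  shows "tfrob n d (\<lambda>ix. X ix - tt_tensor (tt_cores n d r U V) r d ix) \<le> \<epsilon> * tfrob n d X"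
proof -
  note d2 = assms(1) and eps = assms(2) and r0 = assms(4) and rd = assms(5)
    and Uc = assms(6) and UU = assms(7) and Vc = assms(8) and hyp = assms(9)
  define T where "T = tfrob n d X"
  define \<delta> where "\<delta> = \<epsilon> / sqrt (real (d - 1)) * T"
  define x where "x l = X (mindex n d l)" for l
  define E where "E k = (\<Sum>l<pdim n d. (cmod (x l - yv n d r U V k l))\<^sup>2)" for k
  have T0: "T \<ge> 0" unfolding T_def tfrob_def by (simp add: sum_nonneg)
  have hyp2: "msq (tunfold n d X j - U j * mat_adjoint (V j)) \<le> \<delta>\<^sup>2" if j: "1 \<le> j" "j \<le> d - 1" for j
  proof -
    have "sqrt (msq (tunfold n d X j - U j * mat_adjoint (V j))) \<le> \<delta>"
      using hyp[OF j] unfolding mfrob_msq \<delta>_def T_def .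
    moreover have "0 \<le> sqrt (msq (tunfold n d X j - U j * mat_adjoint (V j)))" using msq_nonneg by simp
    ultimately have "(sqrt (msq (tunfold n d X j - U j * mat_adjoint (V j))))\<^sup>2 \<le> \<delta>\<^sup>2"
      by (intro power_mono) auto
    thus ?thesis using msq_nonneg[of "tunfold n d X j - U j * mat_adjoint (V j)"] by simp
  qed
  have E_um: "E k = msq (tunfold n d X j - um n d j (yv n d r U V k))" if j: "j \<le> d" for k j
    unfolding E_def tunfold_um um_minus[symmetric] msq_um[OF j] x_def ..
  have base: "E (d - 1) \<le> \<delta>\<^sup>2"
    using E_um[of "d - 1" "d - 1"] y2[OF d2 r0 rd Uc Vc] hyp2[of "d - 1"] d2 by simp
  have step: "E k \<le> \<delta>\<^sup>2 + E (Suc k)" if k: "1 \<le> k" "Suc k \<le> d - 1" for k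
  proof -
    interpret isom "U k" "pdim n k" "r k"
      by unfold_locales (use Uc[of k] UU[of k] k in auto)
    have M: "tunfold n d X k \<in> carrier_mat (pdim n k) (qdim n d k)" unfolding tunfold_um by simp
    have Vk: "V k \<in> carrier_mat (qdim n d k) (r k)" using Vc[of k] k by simp
    have "E k = msq (tunfold n d X k - P * um n d k (yv n d r U V (Suc k)))"
      using E_um[of k k] y3[OF d2 r0 rd Uc Vc k] k unfolding P_def by simp
    also have "\<dots> \<le> msq (tunfold n d X k - U k * mat_adjoint (V k)) + msq (tunfold n d X k - um n d k (yv n d r U V (Suc k)))"
      by (rule step[OF M um_carrier Vk])
    also have "msq (tunfold n d X k - um n d k (yv n d r U V (Suc k))) = E (Suc k)"
      using E_um[of k "Suc k"] k by simp
    finally show ?thesis using hyp2[of k] k by simp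
  qed
  have ind: "E (d - 1 - m) \<le> real (Suc m) * \<delta>\<^sup>2" if "m \<le> d - 2" for m
    using that
  proof (induction m)
    case 0 thus ?case using base by simp
  next
    case (Suc m)
    have "E (d - 1 - Suc m) \<le> \<delta>\<^sup>2 + E (Suc (d - 1 - Suc m))"
      using Suc.prems by (intro step) auto
    also have "Suc (d - 1 - Suc m) = d - 1 - m" using Suc.prems by simp
    also have "E (d - 1 - m) \<le> real (Suc m) * \<delta>\<^sup>2" using Suc.IH Suc.prems by simp
    finally show ?case by (simp add: algebra_simps)
  qed
  have E1: "E 1 \<le> real (d - 1) * \<delta>\<^sup>2"
    using ind[of "d - 2"] d2 by (simp add: Suc_diff_Suc numeral_2_eq_2)
  have "real (d - 1) * \<delta>\<^sup>2 = (\<epsilon> * T)\<^sup>2"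
    unfolding \<delta>_def using d2 by (simp add: power_mult_distrib power_divide)
  hence E1': "E 1 \<le> (\<epsilon> * T)\<^sup>2" using E1 by simp
  have "tfrob n d (\<lambda>ix. X ix - tt_tensor (tt_cores n d r U V) r d ix) = sqrt (E 1)"
    unfolding tfrob_sum E_def x_def
    by (intro arg_cong[where f = sqrt] sum.cong refl) (simp add: y1[OF d2 r0 rd Uc Vc])
  also have "\<dots> \<le> sqrt ((\<epsilon> * T)\<^sup>2)" using E1' by (rule real_sqrt_le_mono)
  also have "\<dots> = \<epsilon> * T" using eps T0 by simp
  finally show ?thesis unfolding T_def .
qed

end
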